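(* Let $f$ be a real-valued symmetric ternary tensor in $(\mathbb{C}^3)^{\otimes 3}$, and suppose there exist $\alpha,\beta,\gamma\in\mathbb{C}^3$ with $f=\alpha^{\otimes 3}+\beta^{\otimes 3}+\gamma^{\otimes 3}$ and $\langle\alpha,\beta\rangle=\langle\beta,\gamma\rangle=\langle\gamma,\alpha\rangle=0$. Then there exist real vectors $\alpha',\beta',\gamma'\in\mathbb{R}^3$ with $f=\alpha'^{\otimes 3}+\beta'^{\otimes 3}+\gamma'^{\otimes 3}$ and $\langle\alpha',\beta'\rangle=\langle\beta',\gamma'\rangle=\langle\gamma',\alpha'\rangle=0$. Consequently, there is a $3\times3$ real orthogonal matrix $T$ and $a,b,c\in\mathbb{R}$ such that $T^{\otimes 3} f = a\,e_1^{\otimes 3}+b\,e_2^{\otimes 3}+c\,e_3^{\otimes 3}$.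
   Context: A ternary signature on domain $\{1,2,3\}$ (colors R, G, B) is a function $\{1,2,3\}^3\to\mathbb{C}$, identified with a tensor in $(\mathbb{C}^3)^{\otimes 3}$; it is symmetric if invariant under permutation of its arguments. For $u,v\in\mathbb{C}^n$, $\langle u,v\rangle=\sum_j u_jv_j$ (bilinear, no conjugation). $e_1,e_2,e_3$ are the standard basis vectors. For a matrix $T$, $Tf$ denotes $T^{\otimes 3}f$. *)

theory Defs
  imports "HOL-Analysis.Analysis"
begin

type_synonym tsig = "3 \<Rightarrow> 3 \<Rightarrow> 3 \<Rightarrow> complex"

definition symmetric_sig :: "tsig \<Rightarrow> bool" where
  "symmetric_sig f \<longleftrightarrow> (\<forall>x y z. f x y z = f y x z \<and> f x y z = f x z y)"

definition real_valued_sig :: "tsig \<Rightarrow> bool" where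
  "real_valued_sig f \<longleftrightarrow> (\<forall>x y z. f x y z \<in> \<real>)"

definition cube :: "complex ^ 3 \<Rightarrow> tsig" where
  "cube a = (\<lambda>x y z. a $ x * a $ y * a $ z)"

text \<open>Bilinear form <u,v> = sum_j u_j v_j (no conjugation).\<close>
definition bil :: "complex ^ 3 \<Rightarrow> complex ^ 3 \<Rightarrow> complex" where
  "bil u v = (\<Sum>j\<in>UNIV. u $ j * v $ j)"

definition tmul :: "complex ^ 3 ^ 3 \<Rightarrow> tsig \<Rightarrow> tsig" where
  "tmul T f = (\<lambda>x y z. \<Sum>u\<in>UNIV. \<Sum>v\<in>UNIV. \<Sum>w\<in>UNIV.
      T $ x $ u * T $ y $ v * T $ z $ w * f u v w)"

definition e :: "3 \<Rightarrow> complex ^ 3" where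
  "e i = (\<chi> j. if j = i then 1 else 0)"

end

theory Submission
  imports Defs
begin

definition cplx :: "real ^ 3 \<Rightarrow> complex ^ 3" where
  "cplx v = (\<chi> i. complex_of_real (v $ i))"

lemma bil_sym: "bil u v = bil v u"
  by (simp add: bil_def mult.commute)

lemma nonisotropic_real:
  fixes f :: tsig and \<alpha> \<beta> \<gamma> :: "complex^3"
  assumes real: "real_valued_sig f"
  and fdef: "f = (\<lambda>x y z. cube \<alpha> x y z + cube \<beta> x y z + cube \<gamma> x y z)"
  and ab: "bil \<alpha> \<beta> = 0" and ag: "bil \<alpha> \<gamma> = 0"
  and nz: "bil \<alpha> \<alpha> \<noteq> 0"
  shows "\<exists>v::real^3. \<exists>t. cube \<alpha> = cube (cplx v) \<and> cplx v = t *s \<alpha>"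
proof -
  define a where "a = bil \<alpha> \<alpha>"
  have ba: "bil \<beta> \<alpha> = 0" and ga: "bil \<gamma> \<alpha> = 0" using ab ag bil_sym by metis+
  have eig0: "(\<Sum>y\<in>UNIV. f x y z * \<alpha>$y) = \<alpha>$x*\<alpha>$z*bil \<alpha> \<alpha> + \<beta>$x*\<beta>$z*bil \<beta> \<alpha> + \<gamma>$x*\<gamma>$z*bil \<gamma> \<alpha>" for x z
    unfolding fdef cube_def bil_def by (simp add: sum_3 algebra_simps)
  have eig: "(\<Sum>y\<in>UNIV. f x y z * \<alpha>$y) = (a * \<alpha>$z) * \<alpha>$x" for x z
    using eig0[of x z] ba ga by (simp add: a_def algebra_simps)
  define nrm where "nrm = (\<Sum>x\<in>UNIV. cnj (\<alpha>$x) * \<alpha>$x)"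
  define N where "N z = (\<Sum>x\<in>UNIV. \<Sum>y\<in>UNIV. cnj (\<alpha>$x) * f x y z * \<alpha>$y)" for z
  have NN: "N z = (a * \<alpha>$z) * nrm" for z
  proof -
    have "N z = (\<Sum>x\<in>UNIV. cnj (\<alpha>$x) * (\<Sum>y\<in>UNIV. f x y z * \<alpha>$y))"
      unfolding N_def by (simp add: sum_distrib_left mult.assoc)
    also have "\<dots> = (\<Sum>x\<in>UNIV. (a * \<alpha>$z) * (cnj (\<alpha>$x) * \<alpha>$x))"
      by (simp only: eig) (simp add: mult_ac)
    finally show ?thesis by (simp add: nrm_def sum_distrib_left)
  qed
  have fsym: "f x y z = f y x z" for x y z by (simp add: fdef cube_def mult_ac)
  have fcnj: "cnj (f x y z) = f x y z" for x y z
    using real by (simp add: real_valued_sig_def Reals_cnj_iff)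
  have Nreal: "N z \<in> \<real>" for z
  proof -
    have "cnj (N z) = (\<Sum>x\<in>UNIV. \<Sum>y\<in>UNIV. \<alpha>$x * f x y z * cnj (\<alpha>$y))"
      unfolding N_def by (simp add: cnj_sum fcnj)
    also have "\<dots> = (\<Sum>y\<in>UNIV. \<Sum>x\<in>UNIV. \<alpha>$x * f x y z * cnj (\<alpha>$y))"
      by (rule sum.swap)
    also have "\<dots> = N z"
      unfolding N_def by (simp add: fsym mult_ac)
    finally show ?thesis by (simp add: Reals_cnj_iff)
  qed
  have nrm_eq: "nrm = of_real (\<Sum>x\<in>UNIV. (cmod (\<alpha>$x))^2)"
    unfolding nrm_def of_real_sum by (rule sum.cong) (simp_all only: complex_norm_square[symmetric] of_real_power mult.commute)
  have anz: "\<alpha> \<noteq> 0" using nz by (auto simp: bil_def)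
  then obtain j where j: "\<alpha>$j \<noteq> 0" by (auto simp: vec_eq_iff)
  have "(\<Sum>x\<in>UNIV. (cmod (\<alpha>$x))^2) \<noteq> 0"
  proof
    assume "(\<Sum>x\<in>UNIV. (cmod (\<alpha>$x))^2) = 0"
    then have "(cmod (\<alpha>$j))^2 = 0" by (subst (asm) sum_nonneg_eq_0_iff) auto
    with j show False by simp
  qed
  then have nrmnz: "nrm \<noteq> 0" and nrmR: "nrm \<in> \<real>" unfolding nrm_eq by (simp only: of_real_eq_0_iff, simp only: Reals_of_real, simp)
  have lamR: "a * \<alpha>$z \<in> \<real>" for z
  proof -
    have "a * \<alpha>$z = N z / nrm" using NN[of z] nrmnz by simp
    thus ?thesis using Nreal nrmR Reals_divide by simp
  qed
  define r where "r = (\<chi> z. Re (a * \<alpha>$z))"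
  have cr: "cplx r = a *s \<alpha>"
    unfolding cplx_def r_def vec_eq_iff using lamR by (simp only: vec_lambda_beta vector_smult_component of_real_Re, simp)
  define \<rho> where "\<rho> = r \<bullet> r"
  have rho3: "complex_of_real \<rho> = a^3"
  proof -
    have "complex_of_real \<rho> = (\<Sum>z\<in>UNIV. (cplx r $ z) * (cplx r $ z))"
      by (simp add: \<rho>_def inner_vec_def cplx_def)
    also have "\<dots> = a^2 * a" by (simp add: cr a_def bil_def sum_distrib_left power2_eq_square mult_ac)
    finally show ?thesis by (simp add: power3_eq_cube power2_eq_square)
  qed
  have rho0: "\<rho> \<ge> 0" by (simp add: \<rho>_def)
  have rhonz: "\<rho> \<noteq> 0" using rho3 nz a_def by auto
  define c where "c = root 3 \<rho>"
  have c3: "c^3 = \<rho>" using rho0 by (simp add: c_def real_root_pow_pos2)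
  have cnz: "c \<noteq> 0" using c3 rhonz by auto
  define v where "v = (1/c) *\<^sub>R r"
  have cv: "cplx v = (a / of_real c) *s \<alpha>"
    using cr unfolding v_def cplx_def by (simp add: vec_eq_iff divide_inverse mult_ac)
  have "cube \<alpha> = cube (cplx v)"
  proof (intro ext)
    fix x y z
    have "cube (cplx v) x y z = (a / of_real c)^3 * cube \<alpha> x y z"
      by (simp add: cv cube_def power3_eq_cube mult_ac)
    also have "(a / of_real c)^3 = 1"
      using rho3 c3 cnz nz by (simp add: a_def power_divide flip: of_real_power)
    finally show "cube \<alpha> x y z = cube (cplx v) x y z" by simp
  qed
  with cv show ?thesis by blast
qed

definition J :: "tsig \<Rightarrow> tsig \<Rightarrow> complex" where
  "J S R = (\<Sum>x\<in>UNIV. \<Sum>y\<in>UNIV. \<Sum>z\<in>UNIV. S x y z * R x y z)"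

lemma J_cube: "J (cube a) (cube b) = bil a b ^ 3"
proof -
  have "J (cube a) (cube b) = (\<Sum>x\<in>UNIV. \<Sum>y\<in>UNIV. \<Sum>z\<in>UNIV. (a$x*b$x) * ((a$y*b$y) * (a$z*b$z)))"
    unfolding J_def cube_def by (simp add: mult_ac)
  also have "\<dots> = bil a b * (bil a b * bil a b)"
    unfolding bil_def by (simp add: sum_distrib_left sum_distrib_right mult_ac)
  finally show ?thesis by (simp add: power3_eq_cube)
qed

lemma J_lin1: "J (\<lambda>x y z. p * S1 x y z + q * S2 x y z + r * S3 x y z) R = p * J S1 R + q * J S2 R + r * J S3 R"
  unfolding J_def by (simp add: distrib_right sum.distrib sum_distrib_left mult.assoc)

lemma J_lin2: "J R (\<lambda>x y z. p * S1 x y z + q * S2 x y z + r * S3 x y z) = p * J R S1 + q * J R S2 + r * J R S3"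
  unfolding J_def by (simp add: distrib_left sum.distrib sum_distrib_left mult_ac)

lemma iso_zero:
  fixes S :: tsig
  assumes real: "real_valued_sig S"
  and Sdef: "S = (\<lambda>x y z. p * cube \<alpha> x y z + q * cube \<beta> x y z + r * cube \<gamma> x y z)"
  and "p * bil \<alpha> \<alpha> = 0" "q * bil \<beta> \<beta> = 0" "r * bil \<gamma> \<gamma> = 0"
  and "bil \<alpha> \<beta> = 0" "bil \<beta> \<gamma> = 0" "bil \<gamma> \<alpha> = 0"
  shows "S x y z = 0"
proof -
  have b2: "bil \<beta> \<alpha> = 0" "bil \<gamma> \<beta> = 0" "bil \<alpha> \<gamma> = 0"
    using assms bil_sym by metis+
  have "J S S = p * J S (cube \<alpha>) + q * J S (cube \<beta>) + r * J S (cube \<gamma>)"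
    by (subst (2) Sdef) (rule J_lin2)
  also have "\<dots> = p * (p * bil \<alpha> \<alpha> ^3 + q * bil \<beta> \<alpha> ^3 + r * bil \<gamma> \<alpha> ^3)
      + q * (p * bil \<alpha> \<beta> ^3 + q * bil \<beta> \<beta> ^3 + r * bil \<gamma> \<beta> ^3)
      + r * (p * bil \<alpha> \<gamma> ^3 + q * bil \<beta> \<gamma> ^3 + r * bil \<gamma> \<gamma> ^3)"
    by (simp only: Sdef J_lin1 J_cube)
  also have "\<dots> = 0"
    using assms(3-) b2 by (auto simp: power3_eq_cube)
  finally have JS: "J S S = 0" .
  define T where "T x y z = Re (S x y z)" for x y z
  have ST: "S x y z = of_real (T x y z)" for x y z
    using real by (simp add: T_def real_valued_sig_def of_real_Re)
  have "complex_of_real (\<Sum>x\<in>UNIV. \<Sum>y\<in>UNIV. \<Sum>z\<in>UNIV. T x y z * T x y z) = J S S"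
    unfolding J_def by (simp add: ST)
  then have "(\<Sum>x\<in>UNIV. \<Sum>y\<in>UNIV. \<Sum>z\<in>UNIV. T x y z * T x y z) = 0" using JS by (simp only: of_real_eq_0_iff)
  then have "T x y z * T x y z = 0"
    by (simp add: sum_nonneg_eq_0_iff sum_nonneg)
  then show ?thesis by (simp add: ST)
qed

lemma basis3:
  fixes a b c :: "real^3"
  assumes ab: "a \<bullet> b = 0" and bc: "b \<bullet> c = 0" and ca: "c \<bullet> a = 0"
  obtains T :: "real^3^3" where "orthogonal_matrix T"
    "\<And>v. v \<in> {a,b,c} \<Longrightarrow> \<exists>k. T *v v = norm v *\<^sub>R axis k 1"
proof -
  define P where "P = (\<lambda>v. v /\<^sub>R norm v) ` ({a,b,c} - {0})"
  have orth3: "\<And>u v. u \<in> {a,b,c} \<Longrightarrow> v \<in> {a,b,c} \<Longrightarrow> u \<noteq> v \<Longrightarrow> u \<bullet> v = 0"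
    using ab bc ca by (auto simp: inner_commute)
  have Pn: "\<And>x. x \<in> P \<Longrightarrow> norm x = 1" unfolding P_def by (auto simp: field_simps split: if_splits)
  have Porth: "pairwise orthogonal P"
    unfolding P_def pairwise_def orthogonal_def
    using orth3 by (auto simp: inner_commute)
  obtain U where U: "pairwise orthogonal (P \<union> U)" "span (P \<union> U) = span (P \<union> UNIV)"
    using orthogonal_extension[OF Porth] by blast
  define S where "S = (P \<union> U) - {0}"
  have S: "pairwise orthogonal S" "span S = UNIV" "0 \<notin> S"
    using U span_delete_0[of "P \<union> U"] by (auto simp: S_def pairwise_def)
  have "independent S" using S pairwise_orthogonal_independent by blast
  then have "finite S" "card S = DIM(real^3)"
    using independent_imp_finite apply blast
    using S(2) \<open>independent S\<close> by (simp add: indep_card_eq_dim_span)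
  let ?B = "(\<lambda>x. x /\<^sub>R norm x) ` S"
  have PB: "P \<subseteq> ?B"
  proof
    fix x assume "x \<in> P"
    then have "norm x = 1" using Pn by auto
    with \<open>x \<in> P\<close> have "x \<in> S" by (auto simp: S_def)
    note this \<open>norm x = 1\<close>
    then show "x \<in> ?B" by (intro image_eqI[of _ _ x]) simp_all
  qed
  have Borth: "pairwise orthogonal ?B"
    using S(1) by (auto simp: pairwise_def orthogonal_def)
  have Bn: "\<And>x. x \<in> ?B \<Longrightarrow> norm x = 1"
    using S(3) by (auto simp: field_split_simps)
  have "inj_on (\<lambda>x. x /\<^sub>R norm x) S"
    unfolding inj_on_def
    by (metis (full_types) S(1) \<open>0 \<notin> S\<close> inverse_nonzero_iff_nonzero norm_eq_zero orthogonal_scaleR orthogonal_self pairwise_def)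
  then have cB: "card ?B = CARD(3)"
    using \<open>card S = DIM(real^3)\<close> by (simp add: card_image)
  obtain f where f: "bij_betw f (UNIV::3 set) ?B"
    using finite_same_card_bij[of "UNIV::3 set" ?B] cB \<open>finite S\<close> by auto
  have fB: "f i \<in> ?B" for i using bij_betwE[OF f] by blast
  have fn: "norm (f i) = 1" for i using fB Bn by blast
  have finj: "i \<noteq> j \<Longrightarrow> f i \<noteq> f j" for i j
    using bij_betw_imp_inj_on[OF f] unfolding inj_on_def by blast
  have fo: "i \<noteq> j \<Longrightarrow> f i \<bullet> f j = 0" for i j
    using finj[of i j] fB[of i] fB[of j] Borth unfolding pairwise_def orthogonal_def by blast
  define T where "T = (\<chi> i j. f i $ j)"
  have rowT: "row i T = f i" for i by (simp add: T_def row_def vec_eq_iff)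
  have oT: "orthogonal_matrix T"
    unfolding orthogonal_matrix_orthonormal_rows rowT using fn fo by (simp add: orthogonal_def)
  have Tv: "(T *v v) $ i = f i \<bullet> v" for v i
    by (simp add: T_def matrix_vector_mult_def inner_vec_def)
  have "\<exists>k. T *v v = norm v *\<^sub>R axis k 1" if v: "v \<in> {a,b,c}" for v
  proof (cases "v = 0")
    case True then show ?thesis by simp
  next
    case False
    then have "v /\<^sub>R norm v \<in> ?B" using PB v unfolding P_def by blast
    then obtain k where k: "f k = v /\<^sub>R norm v" using bij_betw_imp_surj_on[OF f] by (metis imageE)
    have vq: "v = norm v *\<^sub>R f k" using False k by simp
    have "T *v v = norm v *\<^sub>R axis k 1"
    proof (subst vec_eq_iff, intro allI)
      fix i
      have "(T *v v) $ i = norm v * (f i \<bullet> f k)"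
        by (subst vq) (simp add: Tv)
      also have "\<dots> = norm v * (if i = k then 1 else 0)"
        using fo[of i k] fn[of k] by (auto simp: norm_eq_1)
      finally show "(T *v v) $ i = (norm v *\<^sub>R axis k 1) $ i"
        by (simp add: axis_def)
    qed
    then show ?thesis by blast
  qed
  with oT that show ?thesis by blast
qed

lemma choose_real:
  fixes f :: tsig and \<alpha> \<beta> \<gamma> :: "complex^3"
  assumes real: "real_valued_sig f"
  and fdef: "f = (\<lambda>x y z. cube \<alpha> x y z + cube \<beta> x y z + cube \<gamma> x y z)"
  and ab: "bil \<alpha> \<beta> = 0" and ag: "bil \<alpha> \<gamma> = 0"
  shows "\<exists>v t. cplx v = t *s \<alpha> \<and> cube \<alpha> = (\<lambda>x y z. (if bil \<alpha> \<alpha> = 0 then 1 else 0) * cube \<alpha> x y z + cube (cplx v) x y z)"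
proof (cases "bil \<alpha> \<alpha> = 0")
  case True
  show ?thesis
    by (rule exI[of _ 0], rule exI[of _ 0]) (simp add: True cplx_def cube_def vec_eq_iff)
next
  case False
  from nonisotropic_real[OF real fdef ab ag False] obtain v t where
    "cube \<alpha> = cube (cplx v)" "cplx v = t *s \<alpha>" by blast
  then show ?thesis using False by auto
qed

lemma inner_cplx: "complex_of_real (u \<bullet> w) = bil (cplx u) (cplx w)"
  by (simp add: inner_vec_def bil_def cplx_def)

lemma bil_smult: "bil (s *s u) (t *s w) = s * t * bil u w"
  by (simp add: bil_def sum_distrib_left mult_ac)

lemma cube_cplx_real: "cube (cplx v) x y z \<in> \<real>"
  by (simp add: cube_def cplx_def)

lemma tmul_cube: "tmul (map_matrix complex_of_real T) (cube (cplx v)) = cube (cplx (T *v v))"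
  unfolding tmul_def cube_def cplx_def matrix_vector_mult_def
  by (intro ext) (simp add: sum_3 algebra_simps)

lemma tmul_add3: "tmul M (\<lambda>x y z. A x y z + B x y z + C x y z) = (\<lambda>x y z. tmul M A x y z + tmul M B x y z + tmul M C x y z)"
  unfolding tmul_def by (intro ext) (simp add: distrib_left sum.distrib)

lemma cube_axis: "cube (cplx (s *\<^sub>R axis k 1)) x y z = of_real (s^3) * cube (e k) x y z"
  by (simp add: cube_def cplx_def e_def axis_def power3_eq_cube)

lemma cube_e_split: "of_real s * cube (e k) x y z =
   of_real (if k = 1 then s else 0) * cube (e 1) x y z + of_real (if k = 2 then s else 0) * cube (e 2) x y z
   + of_real (if k = 3 then s else 0) * cube (e 3) x y z"
  using exhaust_3[of k] by auto

theorem mainTheorem2: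
  fixes f :: tsig and \<alpha> \<beta> \<gamma> :: "complex ^ 3"
  assumes "symmetric_sig f" and "real_valued_sig f"
    and "f = (\<lambda>x y z. cube \<alpha> x y z + cube \<beta> x y z + cube \<gamma> x y z)"
    and "bil \<alpha> \<beta> = 0" and "bil \<beta> \<gamma> = 0" and "bil \<gamma> \<alpha> = 0"
  shows "(\<exists>\<alpha>' \<beta>' \<gamma>' :: real ^ 3.
            f = (\<lambda>x y z. cube (\<chi> i. complex_of_real (\<alpha>' $ i)) x y z
                        + cube (\<chi> i. complex_of_real (\<beta>' $ i)) x y z
                        + cube (\<chi> i. complex_of_real (\<gamma>' $ i)) x y z)
          \<and> \<alpha>' \<bullet> \<beta>' = 0 \<and> \<beta>' \<bullet> \<gamma>' = 0 \<and> \<gamma>' \<bullet> \<alpha>' = 0)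
       \<and> (\<exists>(T :: real ^ 3 ^ 3) (a::real) b c. orthogonal_matrix T \<and>
            tmul (map_matrix complex_of_real T) f =
              (\<lambda>x y z. of_real a * cube (e 1) x y z + of_real b * cube (e 2) x y z
                        + of_real c * cube (e 3) x y z))"
proof -
  note real = assms(2) and fdef = assms(3)
  have ab: "bil \<alpha> \<beta> = 0" and bg: "bil \<beta> \<gamma> = 0" and ga: "bil \<gamma> \<alpha> = 0"
    using assms by auto
  have ba: "bil \<beta> \<alpha> = 0" and gb: "bil \<gamma> \<beta> = 0" and ag: "bil \<alpha> \<gamma> = 0"
    using ab bg ga bil_sym by metis+
  have f2: "f = (\<lambda>x y z. cube \<beta> x y z + cube \<gamma> x y z + cube \<alpha> x y z)"
    using fdef by (simp add: add_ac)
  have f3: "f = (\<lambda>x y z. cube \<gamma> x y z + cube \<alpha> x y z + cube \<beta> x y z)"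
    using fdef by (simp add: add_ac)
  define p where "p = (if bil \<alpha> \<alpha> = 0 then 1 else 0 :: complex)"
  define q where "q = (if bil \<beta> \<beta> = 0 then 1 else 0 :: complex)"
  define r where "r = (if bil \<gamma> \<gamma> = 0 then 1 else 0 :: complex)"
  obtain a' ta where a1: "cplx a' = ta *s \<alpha>" and a2: "cube \<alpha> = (\<lambda>x y z. p * cube \<alpha> x y z + cube (cplx a') x y z)"
    using choose_real[OF real fdef ab ag] unfolding p_def by blast
  obtain b' tb where b1: "cplx b' = tb *s \<beta>" and b2: "cube \<beta> = (\<lambda>x y z. q * cube \<beta> x y z + cube (cplx b') x y z)"
    using choose_real[OF real f2 bg ba] unfolding q_def by blast
  obtain c' tc where c1: "cplx c' = tc *s \<gamma>" and c2: "cube \<gamma> = (\<lambda>x y z. r * cube \<gamma> x y z + cube (cplx c') x y z)"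
    using choose_real[OF real f3 ga gb] unfolding r_def by blast
  have o1: "a' \<bullet> b' = 0" using inner_cplx[of a' b'] by (simp add: a1 b1 bil_smult ab)
  have o2: "b' \<bullet> c' = 0" using inner_cplx[of b' c'] by (simp add: b1 c1 bil_smult bg)
  have o3: "c' \<bullet> a' = 0" using inner_cplx[of c' a'] by (simp add: c1 a1 bil_smult ga)
  define S where "S x y z = p * cube \<alpha> x y z + q * cube \<beta> x y z + r * cube \<gamma> x y z" for x y z
  have fS: "f x y z = S x y z + (cube (cplx a') x y z + cube (cplx b') x y z + cube (cplx c') x y z)" for x y z
  proof -
    have "f x y z = (p * cube \<alpha> x y z + cube (cplx a') x y z) + (q * cube \<beta> x y z + cube (cplx b') x y z)
        + (r * cube \<gamma> x y z + cube (cplx c') x y z)"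
      using fdef a2 b2 c2 by (metis (no_types, lifting))
    then show ?thesis by (simp add: S_def algebra_simps)
  qed
  have Sreal: "real_valued_sig S"
    unfolding real_valued_sig_def
  proof (intro allI)
    fix x y z
    have "S x y z = f x y z - (cube (cplx a') x y z + cube (cplx b') x y z + cube (cplx c') x y z)"
      using fS by simp
    moreover have "f x y z \<in> \<real>" using real by (simp add: real_valued_sig_def)
    ultimately show "S x y z \<in> \<real>" using cube_cplx_real by (simp add: Reals_diff Reals_add)
  qed
  have S0: "S x y z = 0" for x y z
    by (rule iso_zero[OF Sreal _ _ _ _ ab bg ga, of p q r])
       (auto simp: S_def p_def q_def r_def fun_eq_iff)
  have ff: "f = (\<lambda>x y z. cube (cplx a') x y z + cube (cplx b') x y z + cube (cplx c') x y z)"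
    using fS S0 by (intro ext) simp
  have part1: "\<exists>\<alpha>' \<beta>' \<gamma>' :: real ^ 3.
            f = (\<lambda>x y z. cube (\<chi> i. complex_of_real (\<alpha>' $ i)) x y z
                        + cube (\<chi> i. complex_of_real (\<beta>' $ i)) x y z
                        + cube (\<chi> i. complex_of_real (\<gamma>' $ i)) x y z)
          \<and> \<alpha>' \<bullet> \<beta>' = 0 \<and> \<beta>' \<bullet> \<gamma>' = 0 \<and> \<gamma>' \<bullet> \<alpha>' = 0"
    using ff o1 o2 o3 unfolding cplx_def by blast
  obtain T :: "real^3^3" where oT: "orthogonal_matrix T"
    and Tv: "\<And>v. v \<in> {a',b',c'} \<Longrightarrow> \<exists>k. T *v v = norm v *\<^sub>R axis k 1"
    using basis3[OF o1 o2 o3] by blast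
  obtain ka where ka: "T *v a' = norm a' *\<^sub>R axis ka 1" using Tv by blast
  obtain kb where kb: "T *v b' = norm b' *\<^sub>R axis kb 1" using Tv by blast
  obtain kc where kc: "T *v c' = norm c' *\<^sub>R axis kc 1" using Tv by blast
  define co where "co j = (if ka = j then norm a' ^ 3 else 0) + (if kb = j then norm b' ^ 3 else 0)
     + (if kc = j then norm c' ^ 3 else 0)" for j
  have "tmul (map_matrix complex_of_real T) f =
      (\<lambda>x y z. of_real (co 1) * cube (e 1) x y z + of_real (co 2) * cube (e 2) x y z
                        + of_real (co 3) * cube (e 3) x y z)"
  proof (intro ext)
    fix x y z
    have "tmul (map_matrix complex_of_real T) f x y z =
        of_real (norm a' ^3) * cube (e ka) x y z + of_real (norm b' ^3) * cube (e kb) x y z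
        + of_real (norm c' ^3) * cube (e kc) x y z"
      by (simp only: ff tmul_add3 tmul_cube ka kb kc cube_axis)
    also have "\<dots> = of_real (co 1) * cube (e 1) x y z + of_real (co 2) * cube (e 2) x y z
                        + of_real (co 3) * cube (e 3) x y z"
      apply (subst (1 2 3) cube_e_split)
      by (simp add: co_def algebra_simps)
    finally show "tmul (map_matrix complex_of_real T) f x y z = of_real (co 1) * cube (e 1) x y z + of_real (co 2) * cube (e 2) x y z
                        + of_real (co 3) * cube (e 3) x y z" .
  qed
  with oT part1 show ?thesis by blast
qed

end
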